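(* Let $A\in\mathbb{C}^{n\times n}$, $C\in\mathbb{C}^{1\times n}$, $j\in\mathbb{N}$, and let $s=\{s_1,\dots,s_j\}\subset\mathbb{C}\setminus\Lambda(A^* )$ be a multiset of $j$ finite poles (so $\infty\notin s$). Assume the rational Krylov subspace $\mathcal{K}_j(A^*,C^*,s)$ is $A^*$-variant. Then there exists a rational Arnoldi decomposition $$A^*V_{j+1}\underline{K_j}=V_{j+1}\underline{H_j}$$ associated to $\mathcal{K}_j(A^*,C^*,s)$ such that $\underline{K_j}=\begin{bmatrix}0\\ I_j\end{bmatrix}\in\mathbb{C}^{(j+1)\times j}$, $\underline{H_j}=\begin{bmatrix}h_j\\ H_{-j}\end{bmatrix}$ with $h_j\in\mathbb{C}^{1\times j}$ and $H_{-j}\in\mathbb{C}^{j\times j}$ upper triangular, and $V_{j+1}=\begin{bmatrix}C^*& Z_j\end{bmatrix}$, where $Z_j\in\mathbb{C}^{n\times j}$ is a basis of $\mathcal{K}_j(A^*,C^*,s)$.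
   Context: Notation: $\Pi_k$ is the set of complex polynomials of degree at most $k$; $\Lambda(M)$ is the spectrum of $M$; $M^*$ is the conjugate transpose. For $M\in\mathbb{C}^{n\times n}$, $b\in\mathbb{C}^n$, $j\in\mathbb{N}$ and a multiset $s=\{s_1,\dots,s_j\}\subset(\mathbb{C}\cup\{\infty\})\setminus\Lambda(M)$, put $q(x)=\prod_{i:\,s_i\neq\infty}(x-s_i)$; the rational Krylov subspace of order $j$ with poles $s$ is $\mathcal{K}_j(M,b,s)=\{q(M)^{-1}p(M)b : p\in\Pi_{j-1}\}$, and the augmented Krylov subspace is $\mathcal{K}_j^+(M,b,s)=\mathcal{K}_{j+1}(M,b,s\cup\{\infty\})$. A subspace $\mathcal{V}$ is called $M$-variant if $M\mathcal{V}\not\subseteq\mathcal{V}$. A rational Arnoldi decomposition (RAD) is a relation $MV_{j+1}\underline{K_j}=V_{j+1}\underline{H_j}$ with $V_{j+1}\in\mathbb{C}^{n\times(j+1)}$ of full column rank, $\underline{K_j},\underline{H_j}\in\mathbb{C}^{(j+1)\times j}$ upper Hessenberg, such that the lower $j\times j$ subpencil $(H_{-j},K_{-j})$ (rows $2,\dots,j+1$) is regular and its generalized eigenvalues, called the poles of the decomposition, lie outside $\Lambda(M)$. The RAD is associated to $\mathcal{K}_j(M,b,s)$ if its poles are $s$, $V_{j+1}e_1$ is a nonzero multiple of $b$, $\operatorname{span}(V_{j+1})=\mathcal{K}_j^+(M,b,s)$ and $\operatorname{span}(V_{j+1}\underline{K_j})=\mathcal{K}_j(M,b,s)$. *)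

theory Defs
  imports "Jordan_Normal_Form.Schur_Decomposition"
          "Jordan_Normal_Form.Gauss_Jordan_Elimination"
          "Jordan_Normal_Form.Char_Poly"
          "HOL-Computational_Algebra.Polynomial"
begin

(* Conjugate transpose M^* : library notion mat_adjoint (Schur_Decomposition). *)

definition poly_mat :: "complex poly \<Rightarrow> complex mat \<Rightarrow> complex mat" where
  "poly_mat p M = foldr (\<lambda>c acc. c \<cdot>\<^sub>m 1\<^sub>m (dim_row M) + M * acc) (coeffs p)
                     (0\<^sub>m (dim_row M) (dim_row M))"

definition pole_mat :: "complex list \<Rightarrow> complex mat \<Rightarrow> complex mat" where
  "pole_mat s M = foldr (\<lambda>x acc. (M - x \<cdot>\<^sub>m 1\<^sub>m (dim_row M)) * acc) s (1\<^sub>m (dim_row M))"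

definition inv_mat :: "complex mat \<Rightarrow> complex mat" where
  "inv_mat Q = the (mat_inverse Q)"

definition polys_upto :: "nat \<Rightarrow> complex poly set" where
  "polys_upto k = {p. p = 0 \<or> degree p < k}"

definition rat_krylov :: "complex mat \<Rightarrow> complex vec \<Rightarrow> complex list \<Rightarrow> nat \<Rightarrow> complex vec set" where
  "rat_krylov M b s k =
     {inv_mat (pole_mat s M) *\<^sub>v (poly_mat p M *\<^sub>v b) | p. p \<in> polys_upto k}"

(* augmented Krylov subspace K_k^+(M,b,s) = K_{k+1}(M,b,s \<union> {\<infinity>});
   an infinite pole does not contribute to q, so this is the same q with degree bound k *)
definition aug_rat_krylov :: "complex mat \<Rightarrow> complex vec \<Rightarrow> complex list \<Rightarrow> nat \<Rightarrow> complex vec set" where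
  "aug_rat_krylov M b s k = rat_krylov M b s (Suc k)"

definition mat_variant :: "complex mat \<Rightarrow> complex vec set \<Rightarrow> bool" where
  "mat_variant M W \<longleftrightarrow> \<not> (\<forall>v\<in>W. M *\<^sub>v v \<in> W)"

definition col_span :: "complex mat \<Rightarrow> complex vec set" where
  "col_span V = {V *\<^sub>v x | x. x \<in> carrier_vec (dim_col V)}"

definition full_col_rank :: "complex mat \<Rightarrow> bool" where
  "full_col_rank V \<longleftrightarrow>
     (\<forall>x\<in>carrier_vec (dim_col V). V *\<^sub>v x = 0\<^sub>v (dim_row V) \<longrightarrow> x = 0\<^sub>v (dim_col V))"

definition is_basis_mat :: "complex mat \<Rightarrow> complex vec set \<Rightarrow> bool" where
  "is_basis_mat Z W \<longleftrightarrow> full_col_rank Z \<and> col_span Z = W"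

definition upper_hessenberg :: "complex mat \<Rightarrow> bool" where
  "upper_hessenberg H \<longleftrightarrow>
     (\<forall>i<dim_row H. \<forall>k<dim_col H. Suc k < i \<longrightarrow> H $$ (i, k) = 0)"

definition lower_part :: "complex mat \<Rightarrow> complex mat" where
  "lower_part H = mat (dim_col H) (dim_col H) (\<lambda>(i, k). H $$ (Suc i, k))"

definition is_RAD :: "complex mat \<Rightarrow> nat \<Rightarrow> complex mat \<Rightarrow> complex mat \<Rightarrow> complex mat \<Rightarrow> bool" where
  "is_RAD M j V K H \<longleftrightarrow>
     (let n = dim_row M in
      M \<in> carrier_mat n n \<and>
      V \<in> carrier_mat n (Suc j) \<and> K \<in> carrier_mat (Suc j) j \<and> H \<in> carrier_mat (Suc j) j \<and>
      full_col_rank V \<and>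
      M * V * K = V * H \<and>
      upper_hessenberg K \<and> upper_hessenberg H \<and>
      \<comment> \<open>regularity of the lower subpencil\<close>
      (\<exists>z. det (lower_part H - z \<cdot>\<^sub>m lower_part K) \<noteq> 0) \<and>
      \<comment> \<open>finite generalized eigenvalues (poles) lie outside the spectrum
          (the infinite pole is never in the spectrum)\<close>
      (\<forall>z. det (lower_part H - z \<cdot>\<^sub>m lower_part K) = 0 \<longrightarrow> \<not> eigenvalue M z))"

(* The poles of the RAD, counted with multiplicity, are exactly the finite poles
   in the list s (length s = j, so there are no infinite poles):
   det(H_{-j} - z K_{-j}) = c * prod_i (s_i - z) with c \<noteq> 0. *)
definition RAD_poles_are :: "complex mat \<Rightarrow> complex mat \<Rightarrow> complex list \<Rightarrow> bool" where
  "RAD_poles_are K H s \<longleftrightarrow>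
     length s = dim_col K \<and>
     (\<exists>c. c \<noteq> 0 \<and> (\<forall>z. det (lower_part H - z \<cdot>\<^sub>m lower_part K) = c * (\<Prod>x\<leftarrow>s. (x - z))))"

definition RAD_associated :: "complex mat \<Rightarrow> complex vec \<Rightarrow> complex list \<Rightarrow> nat \<Rightarrow>
    complex mat \<Rightarrow> complex mat \<Rightarrow> complex mat \<Rightarrow> bool" where
  "RAD_associated M b s j V K H \<longleftrightarrow>
     is_RAD M j V K H \<and>
     RAD_poles_are K H s \<and>
     (\<exists>\<alpha>. \<alpha> \<noteq> 0 \<and> col V 0 = \<alpha> \<cdot>\<^sub>v b) \<and>
     col_span V = aug_rat_krylov M b s j \<and>
     col_span (V * K) = rat_krylov M b s j"

end

theory Submission
  imports Defs
begin


lemma pm_foldr_carrier: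
  assumes M: "M \<in> carrier_mat n n"
  shows "foldr (\<lambda>c acc. c \<cdot>\<^sub>m 1\<^sub>m (dim_row M) + M * acc) xs (0\<^sub>m (dim_row M) (dim_row M)) \<in> carrier_mat n n"
  using M by (induction xs) auto

lemma pm_carrier[simp]: "M \<in> carrier_mat n n \<Longrightarrow> poly_mat p M \<in> carrier_mat n n"
  unfolding poly_mat_def by (rule pm_foldr_carrier)

lemma pm_0[simp]: "M \<in> carrier_mat n n \<Longrightarrow> poly_mat 0 M = 0\<^sub>m n n"
  unfolding poly_mat_def by auto

lemma pm_pCons: assumes M: "M \<in> carrier_mat n n"
  shows "poly_mat (pCons a p) M = a \<cdot>\<^sub>m 1\<^sub>m n + M * poly_mat p M"
proof (cases "a = 0 \<and> p = 0")
  case True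
  then show ?thesis using M by auto
next
  case False
  then have "coeffs (pCons a p) = a # coeffs p" by (auto simp: cCons_def)
  then show ?thesis using M unfolding poly_mat_def by auto
qed

lemma add4_mat: fixes A B C D :: "'a::comm_monoid_add mat"
  assumes "A \<in> carrier_mat n m" "B \<in> carrier_mat n m" "C \<in> carrier_mat n m" "D \<in> carrier_mat n m"
  shows "(A + B) + (C + D) = (A + C) + (B + D)"
  by (rule eq_matI) (use assms in \<open>auto simp: ac_simps\<close>)

lemma pm_add: assumes M: "M \<in> carrier_mat n n"
  shows "poly_mat (p + q) M = poly_mat p M + poly_mat q M"
proof (induction p q rule: poly_induct2)
  case 0
  then show ?case using M by simp
next
  case (pCons a p b q)
  have c: "poly_mat p M \<in> carrier_mat n n" "poly_mat q M \<in> carrier_mat n n" using M by auto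
  have "poly_mat (pCons a p + pCons b q) M = (a \<cdot>\<^sub>m 1\<^sub>m n + b \<cdot>\<^sub>m 1\<^sub>m n) + (M * poly_mat p M + M * poly_mat q M)"
    unfolding add_pCons pm_pCons[OF M] pCons
    using add_smult_distrib_right_mat[of "1\<^sub>m n" n n a b] mult_add_distrib_mat[OF M c] by simp
  also have "\<dots> = poly_mat (pCons a p) M + poly_mat (pCons b q) M"
    unfolding pm_pCons[OF M] using M c by (intro add4_mat) auto
  finally show ?case .
qed

lemma smult_smult_mat: "c \<cdot>\<^sub>m (a \<cdot>\<^sub>m (A::'a::semigroup_mult mat)) = (c * a) \<cdot>\<^sub>m A"
  by (rule eq_matI) (auto simp: mult.assoc)

lemma one_smult_mat[simp]: "(1::'a::monoid_mult) \<cdot>\<^sub>m A = A"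
  by (rule eq_matI) auto

lemma zero_smult_mat: "(0::complex) \<cdot>\<^sub>m 1\<^sub>m n = 0\<^sub>m n n"
  by (rule eq_matI) auto

lemma pm_smult: assumes M: "M \<in> carrier_mat n n"
  shows "poly_mat (smult c p) M = c \<cdot>\<^sub>m poly_mat p M"
proof (induction p)
  case 0
  then show ?case using M by (auto intro!: eq_matI)
next
  case (pCons a p)
  have cp: "poly_mat p M \<in> carrier_mat n n" using M by auto
  show ?case unfolding smult_pCons pm_pCons[OF M] pCons(2)
    using M cp add_smult_distrib_left_mat[of "a \<cdot>\<^sub>m 1\<^sub>m n" n n "M * poly_mat p M" c]
      mult_smult_distrib[OF M cp, of c]
    by (simp add: smult_smult_mat)
qed

lemma pm_mult: assumes M: "M \<in> carrier_mat n n"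
  shows "poly_mat (p * q) M = poly_mat p M * poly_mat q M"
proof (induction p)
  case 0
  then show ?case using M left_mult_zero_mat[of "poly_mat q M" n n n] by auto
next
  case (pCons a p)
  have cp: "poly_mat p M \<in> carrier_mat n n" "poly_mat q M \<in> carrier_mat n n" using M by auto
  have "poly_mat (pCons a p * q) M = poly_mat (smult a q) M + poly_mat (pCons 0 (p * q)) M"
    unfolding mult_pCons_left pm_add[OF M] ..
  also have "\<dots> = a \<cdot>\<^sub>m poly_mat q M + M * (poly_mat p M * poly_mat q M)"
    using M cp mult_carrier_mat[OF M mult_carrier_mat[OF cp]] by (intro arg_cong2[where f="(+)"] refl)
      (simp add: zero_smult_mat pm_smult[OF M],
       simp add: pCons(2) zero_smult_mat pm_pCons[OF M] left_add_zero_mat[of "M * (poly_mat p M * poly_mat q M)" n n])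
  also have "\<dots> = poly_mat (pCons a p) M * poly_mat q M"
    unfolding pm_pCons[OF M] using M cp
      add_mult_distrib_mat[of "a \<cdot>\<^sub>m 1\<^sub>m n" n n "M * poly_mat p M" "poly_mat q M" n]
      mult_smult_assoc_mat[of "1\<^sub>m n" n n "poly_mat q M" n a]
      assoc_mult_mat[OF M cp] left_mult_one_mat[OF cp(2)]
    by simp
  finally show ?case .
qed

lemma pm_X: assumes M: "M \<in> carrier_mat n n" shows "poly_mat [:0,1:] M = M"
  unfolding pm_pCons[OF M] using M by auto

lemma pm_const: assumes M: "M \<in> carrier_mat n n" shows "poly_mat [:c:] M = c \<cdot>\<^sub>m 1\<^sub>m n"
  unfolding pm_pCons[OF M] using M by auto

lemma pm_comm: assumes M: "M \<in> carrier_mat n n"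
  shows "poly_mat p M * M = M * poly_mat p M"
  using pm_mult[OF M, of p "[:0,1:]"] pm_mult[OF M, of "[:0,1:]" p]
  by (simp add: pm_X[OF M] mult.commute)

lemma pm_lin: assumes M: "M \<in> carrier_mat n n"
  shows "poly_mat [:-x,1:] M = M - x \<cdot>\<^sub>m 1\<^sub>m n"
  unfolding pm_pCons[OF M] using M by (auto intro!: eq_matI)

lemma pole_mat_poly: assumes M: "M \<in> carrier_mat n n"
  shows "pole_mat s M = poly_mat (prod_list (map (\<lambda>x. [:-x,1:]) s)) M"
proof (induction s)
  case Nil
  have "poly_mat 1 M = 1\<^sub>m n" using pm_const[OF M, of 1] by (simp add: one_pCons)
  then show ?case using M unfolding pole_mat_def by auto
next
  case (Cons a s)
  have "pole_mat (a # s) M = (M - a \<cdot>\<^sub>m 1\<^sub>m (dim_row M)) * pole_mat s M"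
    unfolding pole_mat_def by simp
  then show ?case using Cons M by (simp only: list.map prod_list.Cons pm_mult[OF M] pm_lin[OF M] carrier_matD)
qed

lemma pole_mat_carrier: "M \<in> carrier_mat n n \<Longrightarrow> pole_mat l M \<in> carrier_mat n n"
  using pole_mat_poly[of M n l] by simp

lemma pole_det: assumes M: "M \<in> carrier_mat n n"
  shows "\<forall>x\<in>set l. \<not> eigenvalue M x \<Longrightarrow> det (pole_mat l M) \<noteq> 0"
proof (induction l)
  case Nil
  then show ?case using M by (simp add: pole_mat_def)
next
  case (Cons a l)
  have eq: "pole_mat (a # l) M = (M - a \<cdot>\<^sub>m 1\<^sub>m n) * pole_mat l M"
    using M unfolding pole_mat_def by simp
  have "M - a \<cdot>\<^sub>m 1\<^sub>m n = char_matrix M a"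
    unfolding char_matrix_def using M by (auto intro!: eq_matI)
  then have d1: "det (M - a \<cdot>\<^sub>m 1\<^sub>m n) \<noteq> 0" using Cons(2) eigenvalue_det[OF M, of a] by simp
  have "det (pole_mat (a # l) M) = det (M - a \<cdot>\<^sub>m 1\<^sub>m n) * det (pole_mat l M)"
    unfolding eq using M pole_mat_carrier[OF M, of l] by (intro det_mult) auto
  then show ?case using d1 Cons by simp
qed

lemma inv_mat_props: assumes Q: "Q \<in> carrier_mat n n" and d: "det Q \<noteq> (0::complex)"
  shows "Q * inv_mat Q = 1\<^sub>m n" "inv_mat Q * Q = 1\<^sub>m n" "inv_mat Q \<in> carrier_mat n n"
proof -
  have "mat_inverse Q \<noteq> None"
    using mat_inverse(1)[OF Q, where b="()"] det_non_zero_imp_unit[OF Q d, where b="()"] by blast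
  then obtain B where B: "mat_inverse Q = Some B" by auto
  then have "inv_mat Q = B" unfolding inv_mat_def by simp
  then show "Q * inv_mat Q = 1\<^sub>m n" "inv_mat Q * Q = 1\<^sub>m n" "inv_mat Q \<in> carrier_mat n n"
    using mat_inverse(2)[OF Q B] by auto
qed

lemma smult_mat_mult_vec: "A \<in> carrier_mat nr nc \<Longrightarrow> v \<in> carrier_vec nc \<Longrightarrow> (c \<cdot>\<^sub>m A) *\<^sub>v v = (c::'a::comm_ring) \<cdot>\<^sub>v (A *\<^sub>v v)"
  by (rule eq_vecI) (auto simp: scalar_prod_def sum_distrib_left mult.assoc intro!: sum.cong)

lemma zero_mat_mult_vec: "v \<in> carrier_vec m \<Longrightarrow> 0\<^sub>m n m *\<^sub>v v = (0\<^sub>v n :: 'a::semiring_0 vec)"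
  by (rule eq_vecI) (auto simp: scalar_prod_def)

lemma mat_mult_zero_vec: "A \<in> carrier_mat nr nc \<Longrightarrow> A *\<^sub>v 0\<^sub>v nc = (0\<^sub>v nr :: 'a::semiring_0 vec)"
  by (rule eq_vecI) (auto simp: scalar_prod_def)

locale rk =
  fixes M :: "complex mat" and b :: "complex vec" and s :: "complex list" and n :: nat
  assumes M: "M \<in> carrier_mat n n" and b: "b \<in> carrier_vec n"
    and ne: "\<forall>x\<in>set s. \<not> eigenvalue M x"
begin

definition "Qm = pole_mat s M"
definition "Qi = inv_mat Qm"
definition "w p = Qi *\<^sub>v (poly_mat p M *\<^sub>v b)"
definition "qpol = prod_list (map (\<lambda>x. [:-x,1:]) s)"

lemma Qm_carrier: "Qm \<in> carrier_mat n n" unfolding Qm_def by (rule pole_mat_carrier[OF M])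
lemma Qm_poly: "Qm = poly_mat qpol M" unfolding Qm_def qpol_def by (rule pole_mat_poly[OF M])
lemma Qm_det: "det Qm \<noteq> 0" unfolding Qm_def using pole_det[OF M] ne by blast
lemma Qi_props: "Qm * Qi = 1\<^sub>m n" "Qi * Qm = 1\<^sub>m n" "Qi \<in> carrier_mat n n"
  unfolding Qi_def using inv_mat_props[OF Qm_carrier Qm_det] by auto

lemma Qi_Qm_cancel: "X \<in> carrier_mat n k \<Longrightarrow> Qi * (Qm * X) = X"
proof -
  assume X: "X \<in> carrier_mat n k"
  have "Qi * (Qm * X) = (Qi * Qm) * X" using assoc_mult_mat[OF Qi_props(3) Qm_carrier X] by simp
  then show ?thesis using Qi_props X by simp
qed

lemma Qi_comm: "Qi * M = M * Qi"
proof -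
  have c: "Qm * M = M * Qm" unfolding Qm_poly by (rule pm_comm[OF M])
  have "Qi * M = Qi * M * (Qm * Qi)" using Qi_props M by simp
  also have "\<dots> = Qi * (M * Qm) * Qi" using Qi_props M Qm_carrier by (simp add: assoc_mult_mat[of _ n n _ n _ n])
  also have "\<dots> = Qi * (Qm * M) * Qi" using c by simp
  also have "\<dots> = M * Qi" using Qi_props M Qm_carrier by (simp add: assoc_mult_mat[of _ n n _ n _ n] Qi_Qm_cancel)
  finally show ?thesis .
qed

lemma pb_carrier[simp]: "poly_mat p M *\<^sub>v b \<in> carrier_vec n"
  by (rule mult_mat_vec_carrier[OF pm_carrier[OF M] b])

lemma w_carrier[simp]: "w p \<in> carrier_vec n"
  unfolding w_def by (rule mult_mat_vec_carrier[OF Qi_props(3) pb_carrier])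

lemma w_add: "w (p + q) = w p + w q"
  unfolding w_def pm_add[OF M]
    add_mult_distrib_mat_vec[OF pm_carrier[OF M] pm_carrier[OF M] b]
    mult_add_distrib_mat_vec[OF Qi_props(3) pb_carrier pb_carrier] ..

lemma w_smult: "w (smult c p) = c \<cdot>\<^sub>v w p"
  unfolding w_def pm_smult[OF M] smult_mat_mult_vec[OF pm_carrier[OF M] b]
    mult_mat_vec[OF Qi_props(3) pb_carrier] ..

lemma w_zero: "w 0 = 0\<^sub>v n"
  unfolding w_def pm_0[OF M] zero_mat_mult_vec[OF b] mat_mult_zero_vec[OF Qi_props(3)] ..

lemma w_sum: assumes "finite S" "i < n"
  shows "w (\<Sum>k\<in>S. f k) $ i = (\<Sum>k\<in>S. w (f k) $ i)"
  using assms(1)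
proof (induction S rule: finite_induct)
  case empty
  then show ?case using assms(2) by (simp only: sum.empty w_zero index_zero_vec(1))
next
  case (insert x F)
  have d: "i < dim_vec (w (sum f F))" using w_carrier[of "sum f F"] assms(2) by (simp only: carrier_vec_def mem_Collect_eq)
  have "w (sum f (insert x F)) $ i = (w (f x) + w (sum f F)) $ i"
    by (simp only: sum.insert[OF insert(1,2)] w_add)
  also have "\<dots> = w (f x) $ i + w (sum f F) $ i" by (rule index_add_vec(1)[OF d])
  finally show ?case using insert by simp
qed

lemma w_X: "M *\<^sub>v w p = w ([:0,1:] * p)"
proof -
  have "M *\<^sub>v w p = (M * Qi) *\<^sub>v (poly_mat p M *\<^sub>v b)"
    unfolding w_def using Qi_props M b by simp
  also have "\<dots> = (Qi * M) *\<^sub>v (poly_mat p M *\<^sub>v b)" by (simp add: Qi_comm)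
  also have "\<dots> = Qi *\<^sub>v ((M * poly_mat p M) *\<^sub>v b)" using Qi_props M b
    assoc_mult_mat_vec[OF M pm_carrier[OF M] b, of p] by simp
  also have "\<dots> = w ([:0,1:] * p)" unfolding w_def pm_mult[OF M] pm_X[OF M] ..
  finally show ?thesis .
qed

lemma w_q: "w qpol = b"
proof -
  have "Qi *\<^sub>v (Qm *\<^sub>v b) = (Qi * Qm) *\<^sub>v b"
    using assoc_mult_mat_vec[OF Qi_props(3) Qm_carrier b] by simp
  then show ?thesis unfolding w_def Qm_poly[symmetric] using Qi_props b by simp
qed

lemma w_zero_imp: assumes "w p = 0\<^sub>v n" shows "poly_mat p M *\<^sub>v b = 0\<^sub>v n"
proof -
  have "poly_mat p M *\<^sub>v b = (Qm * Qi) *\<^sub>v (poly_mat p M *\<^sub>v b)" using Qi_props M b by simp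
  also have "\<dots> = Qm *\<^sub>v w p" unfolding w_def using assoc_mult_mat_vec[OF Qm_carrier Qi_props(3) pb_carrier] by simp
  finally show ?thesis using assms mat_mult_zero_vec[OF Qm_carrier] by simp
qed

end



lemma prodlin_deg: "degree (prod_list (map (\<lambda>x. [:-x,1::complex:]) l)) = length l \<and>
   lead_coeff (prod_list (map (\<lambda>x. [:-x,1::complex:]) l)) = 1"
proof (induction l)
  case Nil
  then show ?case by simp
next
  case (Cons a l)
  let ?r = "prod_list (map (\<lambda>x. [:-x,1::complex:]) l)"
  have r0: "?r \<noteq> 0" using Cons by auto
  have "degree ([:-a,1:] * ?r) = 1 + length l" using Cons r0 by (subst degree_mult_eq) auto
  moreover have "lead_coeff ([:-a,1:] * ?r) = 1"
  proof -
    have l1: "lead_coeff [:-a,1::complex:] = 1" by simp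
    have h1: "degree ?r = length l" and h2: "coeff ?r (degree ?r) = 1" using Cons.IH by auto
    show ?thesis unfolding lead_coeff_mult l1 using h2 by simp
  qed
  ultimately show ?case by simp
qed

context rk begin

definition "P k = prod_list (map (\<lambda>x. [:-x,1:]) (drop k s))"

lemma P_deg: "degree (P k) = length s - k"
  unfolding P_def using prodlin_deg[of "drop k s"] by simp

lemma P_lc: "coeff (P k) (length s - k) = 1"
proof -
  have "lead_coeff (P k) = 1" unfolding P_def using prodlin_deg[of "drop k s"] by blast
  then show ?thesis using P_deg[of k] by simp
qed

lemma P_hi: "length s - k < i \<Longrightarrow> coeff (P k) i = 0"
  using P_deg[of k] by (simp add: coeff_eq_0)

lemma P_0: "P 0 = qpol" unfolding P_def qpol_def by simp

lemma P_step: "k < length s \<Longrightarrow> P k = [:-(s!k),1:] * P (Suc k)"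
  unfolding P_def by (subst Cons_nth_drop_Suc[symmetric], assumption) (simp only: list.map prod_list.Cons)

lemma rk_eq: "rat_krylov M b s k = {w p | p. p \<in> polys_upto k}"
  unfolding rat_krylov_def w_def Qi_def Qm_def ..

lemma key:
  assumes var: "mat_variant M (rat_krylov M b s (length s))"
    and p0: "p \<noteq> 0" and dp: "degree p \<le> length s"
  shows "poly_mat p M *\<^sub>v b \<noteq> 0\<^sub>v n"
proof
  assume pb: "poly_mat p M *\<^sub>v b = 0\<^sub>v n"
  have "\<forall>v\<in>rat_krylov M b s (length s). M *\<^sub>v v \<in> rat_krylov M b s (length s)"
  proof
    fix v assume "v \<in> rat_krylov M b s (length s)"
    then obtain r where v: "v = w r" and r: "r \<in> polys_upto (length s)" unfolding rk_eq by auto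
    define d where "d = ([:0,1:] * r) div p"
    define m where "m = ([:0,1:] * r) mod p"
    have dec: "[:0,1:] * r = d * p + m" unfolding d_def m_def by simp
    have wdp: "w (d * p) = 0\<^sub>v n"
    proof -
      have "w (d * p) = Qi *\<^sub>v (poly_mat d M *\<^sub>v (poly_mat p M *\<^sub>v b))"
        unfolding w_def pm_mult[OF M] using assoc_mult_mat_vec[OF pm_carrier[OF M] pm_carrier[OF M] b] by simp
      also have "\<dots> = 0\<^sub>v n" unfolding pb mat_mult_zero_vec[OF pm_carrier[OF M]] mat_mult_zero_vec[OF Qi_props(3)] ..
      finally show ?thesis .
    qed
    have "M *\<^sub>v v = w m" unfolding v w_X dec w_add wdp using w_carrier[of m] by simp
    moreover have "m \<in> polys_upto (length s)"
      using degree_mod_less[OF p0, of "[:0,1:] * r"] dp unfolding m_def polys_upto_def by auto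
    ultimately show "M *\<^sub>v v \<in> rat_krylov M b s (length s)" unfolding rk_eq by auto
  qed
  then show False using var unfolding mat_variant_def by blast
qed

lemma w_dim[simp]: "dim_vec (w p) = n" using w_carrier by (rule carrier_vecD)

lemma mat_w_mult: assumes y: "y \<in> carrier_vec m"
  shows "mat n m (\<lambda>(i,k). w (g k) $ i) *\<^sub>v y = w (\<Sum>k<m. smult (y$k) (g k))"
proof (rule eq_vecI)
  have dy: "dim_vec y = m" using y by (rule carrier_vecD)
  have dw: "\<And>p. dim_vec (w p) = n" using w_carrier by (rule carrier_vecD)
  fix i assume "i < dim_vec (w (\<Sum>k<m. smult (y$k) (g k)))"
  then have i: "i < n" using dw by metis
  have "(mat n m (\<lambda>(i,k). w (g k) $ i) *\<^sub>v y) $ i = row (mat n m (\<lambda>(i,k). w (g k) $ i)) i \<bullet> y"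
    by (rule index_mult_mat_vec) (simp add: i)
  also have "\<dots> = (\<Sum>k\<in>{0..<m}. w (g k) $ i * y $ k)"
    unfolding scalar_prod_def dy by (rule sum.cong) (auto simp: i)
  also have "\<dots> = (\<Sum>k<m. w (smult (y$k) (g k)) $ i)"
    unfolding atLeast0LessThan
  proof (rule sum.cong[OF refl])
    fix k show "w (g k) $ i * y $ k = w (smult (y$k) (g k)) $ i"
      unfolding w_smult index_smult_vec(1)[of i "w (g k)", unfolded dw, OF i] by (rule mult.commute)
  qed
  also have "\<dots> = w (\<Sum>k<m. smult (y$k) (g k)) $ i" by (rule w_sum[symmetric]) (simp_all add: i)
  finally show "(mat n m (\<lambda>(i,k). w (g k) $ i) *\<^sub>v y) $ i = w (\<Sum>k<m. smult (y$k) (g k)) $ i" .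
next
  show "dim_vec (mat n m (\<lambda>(i,k). w (g k) $ i) *\<^sub>v y) = dim_vec (w (\<Sum>k<m. smult (y$k) (g k)))"
    by (simp only: w_dim dim_mult_mat_vec dim_row_mat)
qed

lemma LI: assumes S: "S \<subseteq> {0..length s}" and z: "(\<Sum>k\<in>S. smult (c k) (P k)) = 0"
  shows "\<forall>k\<in>S. c k = 0"
proof -
  have fin: "finite S" using S finite_subset by blast
  { fix m have "m \<in> S \<Longrightarrow> c m = 0"
    proof (induction m rule: less_induct)
      case (less m)
      have "coeff (\<Sum>k\<in>S. smult (c k) (P k)) (length s - m) = (\<Sum>k\<in>S. c k * coeff (P k) (length s - m))"
        by (simp add: coeff_sum)
      also have "\<dots> = (\<Sum>k\<in>S. if k = m then c m else 0)"
      proof (rule sum.cong[OF refl])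
        fix k assume k: "k \<in> S"
        show "c k * coeff (P k) (length s - m) = (if k = m then c m else 0)"
        proof (cases k m rule: linorder_cases)
          case less
          then show ?thesis using less.IH k by simp
        next
          case equal
          then show ?thesis using P_lc by simp
        next
          case greater
          have "k \<le> length s" using k S by auto
          then have "length s - k < length s - m" using greater by simp
          then show ?thesis using P_hi greater by simp
        qed
      qed
      also have "\<dots> = c m" using less.prems fin by simp
      finally show "c m = 0" using z by simp
    qed }
  then show ?thesis by blast
qed

lemma SP: "d \<le> length s \<Longrightarrow> degree p \<le> d \<Longrightarrow>
    \<exists>c. p = (\<Sum>k\<in>{length s - d..length s}. smult (c k) (P k))"
proof (induction d arbitrary: p)
  case 0
  have P1: "P (length s) = 1" unfolding P_def by simp
  have "p = [:coeff p 0:]" using degree_0_id[of p] 0 by simp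
  then have "p = (\<Sum>k\<in>{length s - 0..length s}. smult (coeff p 0) (P k))" using P1 by simp
  then show ?case by (rule exI[of _ "\<lambda>_. coeff p 0"])
next
  case (Suc d)
  define e where "e = length s - Suc d"
  define c0 where "c0 = coeff p (Suc d)"
  define p' where "p' = p - smult c0 (P e)"
  have de: "length s - e = Suc d" using Suc.prems unfolding e_def by simp
  have "degree p' \<le> d"
  proof (rule degree_le, intro allI impI)
    fix i assume i: "d < i"
    show "coeff p' i = 0"
    proof (cases "i = Suc d")
      case True
      then show ?thesis unfolding p'_def c0_def using P_lc[of e] de by simp
    next
      case False
      then have "Suc d < i" using i by simp
      then show ?thesis unfolding p'_def using P_hi[of e i] de Suc.prems(2) by (simp add: coeff_eq_0)
    qed
  qed
  then obtain c' where c': "p' = (\<Sum>k\<in>{length s - d..length s}. smult (c' k) (P k))"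
    using Suc.IH[of p'] Suc.prems by auto
  define c where "c = c'(e := c0)"
  have ins: "{length s - Suc d..length s} = insert e {length s - d..length s}"
    using Suc.prems unfolding e_def by auto
  have enot: "e \<notin> {length s - d..length s}" using Suc.prems unfolding e_def by auto
  have "(\<Sum>k\<in>{length s - Suc d..length s}. smult (c k) (P k))
      = smult c0 (P e) + (\<Sum>k\<in>{length s - d..length s}. smult (c k) (P k))"
    unfolding ins using enot by (simp add: c_def)
  also have "(\<Sum>k\<in>{length s - d..length s}. smult (c k) (P k)) = p'"
    unfolding c' c_def using enot by (intro sum.cong refl) auto
  finally have "p = (\<Sum>k\<in>{length s - Suc d..length s}. smult (c k) (P k))"
    unfolding p'_def by simp
  then show ?case by blast
qed


definition "zz k = w (P k)"
definition "ZZ = mat n (length s) (\<lambda>(i,k). zz (Suc k) $ i)"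
definition "VV = mat_of_cols n (b # cols ZZ)"
definition "KK = mat (Suc (length s)) (length s) (\<lambda>(i, k). if i = Suc k then 1 else (0::complex))"
definition "HH = mat (Suc (length s)) (length s) (\<lambda>(i, k). if i = k then 1 else if i = Suc k then s!k else (0::complex))"

lemma ZZ_carrier: "ZZ \<in> carrier_mat n (length s)" unfolding ZZ_def by simp

lemma zz0: "zz 0 = b" unfolding zz_def P_0 w_q ..

lemma VV_eq: "VV = mat n (Suc (length s)) (\<lambda>(i,k). zz k $ i)"
proof (rule eq_matI)
  fix i k assume i: "i < dim_row (mat n (Suc (length s)) (\<lambda>(i,k). zz k $ i))"
    and k: "k < dim_col (mat n (Suc (length s)) (\<lambda>(i,k). zz k $ i))"
  then have i: "i < n" and k: "k < Suc (length s)" by auto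
  show "VV $$ (i, k) = mat n (Suc (length s)) (\<lambda>(i,k). zz k $ i) $$ (i, k)"
  proof (cases k)
    case 0
    then show ?thesis unfolding VV_def mat_of_cols_def using i zz0 by simp
  next
    case (Suc k')
    then have k': "k' < length s" using k by simp
    show ?thesis unfolding VV_def mat_of_cols_def using i k' Suc by (simp add: ZZ_def cols_def)
  qed
qed (auto simp: VV_def ZZ_def)

lemma VV_carrier: "VV \<in> carrier_mat n (Suc (length s))" unfolding VV_eq by simp

lemma VV_mult: "x \<in> carrier_vec (Suc (length s)) \<Longrightarrow> VV *\<^sub>v x = w (\<Sum>k<Suc (length s). smult (x$k) (P k))"
  unfolding VV_eq zz_def by (rule mat_w_mult)

lemma ZZ_mult: "y \<in> carrier_vec (length s) \<Longrightarrow> ZZ *\<^sub>v y = w (\<Sum>k<length s. smult (y$k) (P (Suc k)))"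
  unfolding ZZ_def zz_def by (rule mat_w_mult)

lemma sumP_deg: assumes "finite S" "\<And>k. k \<in> S \<Longrightarrow> d + k \<ge> length s"
  shows "degree (\<Sum>k\<in>S. smult (c k) (P k)) \<le> d"
proof (rule degree_sum_le[OF assms(1)])
  fix k assume "k \<in> S"
  then have "length s \<le> d + k" by (rule assms(2))
  then show "degree (smult (c k) (P k)) \<le> d" using degree_smult_le[of "c k" "P k"] P_deg[of k] by linarith
qed

lemma sum_shift: "(\<Sum>k<m. f (Suc k)) = (\<Sum>k\<in>Suc ` {..<m}. (f k :: complex poly))"
  by (simp add: sum.reindex)

end


context rk begin

lemma j_pos: assumes var: "mat_variant M (rat_krylov M b s (length s))" shows "0 < length s"
proof (rule ccontr)
  assume "\<not> 0 < length s"
  then have "rat_krylov M b s (length s) = {0\<^sub>v n}" unfolding rk_eq polys_upto_def using w_zero by auto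
  then show False using var M unfolding mat_variant_def using mat_mult_zero_vec[OF M] by auto
qed

lemma fcr_VV: assumes var: "mat_variant M (rat_krylov M b s (length s))" shows "full_col_rank VV"
  unfolding full_col_rank_def
proof (intro ballI impI)
  fix x assume x: "x \<in> carrier_vec (dim_col VV)" and z: "VV *\<^sub>v x = 0\<^sub>v (dim_row VV)"
  have x': "x \<in> carrier_vec (Suc (length s))" using x VV_carrier by auto
  define p where "p = (\<Sum>k<Suc (length s). smult (x$k) (P k))"
  have "w p = 0\<^sub>v n" using z VV_mult[OF x'] VV_carrier unfolding p_def by auto
  then have pb: "poly_mat p M *\<^sub>v b = 0\<^sub>v n" by (rule w_zero_imp)
  have "degree p \<le> length s" unfolding p_def by (rule sumP_deg) auto
  then have "p = 0" using key[OF var _ _] pb by blast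
  then have "\<forall>k\<in>{..<Suc (length s)}. x$k = 0" by (intro LI) (auto simp: p_def)
  then show "x = 0\<^sub>v (dim_col VV)" using x' VV_carrier by (intro eq_vecI) auto
qed

lemma fcr_ZZ: assumes var: "mat_variant M (rat_krylov M b s (length s))" shows "full_col_rank ZZ"
  unfolding full_col_rank_def
proof (intro ballI impI)
  fix y assume y: "y \<in> carrier_vec (dim_col ZZ)" and z: "ZZ *\<^sub>v y = 0\<^sub>v (dim_row ZZ)"
  have y': "y \<in> carrier_vec (length s)" using y ZZ_carrier by auto
  define c where "c k = y $ (k - 1)" for k
  define p where "p = (\<Sum>k\<in>Suc ` {..<length s}. smult (c k) (P k))"
  have pe: "p = (\<Sum>k<length s. smult (y$k) (P (Suc k)))" unfolding p_def c_def by (simp add: sum.reindex)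
  have "w p = 0\<^sub>v n" using z ZZ_mult[OF y'] ZZ_carrier unfolding pe by auto
  then have pb: "poly_mat p M *\<^sub>v b = 0\<^sub>v n" by (rule w_zero_imp)
  have "degree p \<le> length s" unfolding p_def by (rule sumP_deg) auto
  then have "p = 0" using key[OF var _ _] pb by blast
  then have "\<forall>k\<in>Suc ` {..<length s}. c k = 0" by (intro LI) (auto simp: p_def)
  then show "y = 0\<^sub>v (dim_col ZZ)" using y' ZZ_carrier by (intro eq_vecI) (auto simp: c_def)
qed

lemma span_ZZ: assumes var: "mat_variant M (rat_krylov M b s (length s))"
  shows "col_span ZZ = rat_krylov M b s (length s)"
proof
  show "col_span ZZ \<subseteq> rat_krylov M b s (length s)"
  proof
    fix v assume "v \<in> col_span ZZ"
    then obtain y where y: "y \<in> carrier_vec (length s)" and v: "v = ZZ *\<^sub>v y"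
      unfolding col_span_def using ZZ_carrier by auto
    define p where "p = (\<Sum>k\<in>Suc ` {..<length s}. smult (y $ (k - 1)) (P k))"
    have pe: "p = (\<Sum>k<length s. smult (y$k) (P (Suc k)))" unfolding p_def by (simp add: sum.reindex)
    have "degree p \<le> length s - 1" unfolding p_def by (rule sumP_deg) auto
    then have "degree p < length s" using j_pos[OF var] by linarith
    then have "p \<in> polys_upto (length s)" unfolding polys_upto_def by auto
    then show "v \<in> rat_krylov M b s (length s)" unfolding v ZZ_mult[OF y] pe[symmetric] rk_eq by auto
  qed
next
  show "rat_krylov M b s (length s) \<subseteq> col_span ZZ"
  proof
    fix v assume "v \<in> rat_krylov M b s (length s)"
    then obtain p where v: "v = w p" and p: "p \<in> polys_upto (length s)" unfolding rk_eq by auto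
    have "degree p \<le> length s - 1" using p unfolding polys_upto_def by auto
    then obtain c where c: "p = (\<Sum>k\<in>{length s - (length s - 1)..length s}. smult (c k) (P k))"
      using SP[of "length s - 1" p] by auto
    have eqS: "{length s - (length s - 1)..length s} = Suc ` {..<length s}"
    proof -
      have "length s - (length s - 1) = 1" using j_pos[OF var] by arith
      then show ?thesis by (simp add: image_Suc_lessThan)
    qed
    define y where "y = vec (length s) (\<lambda>k. c (Suc k))"
    have y: "y \<in> carrier_vec (length s)" unfolding y_def by simp
    have "p = (\<Sum>k<length s. smult (c (Suc k)) (P (Suc k)))"
      unfolding c eqS sum_shift[symmetric] ..
    also have "\<dots> = (\<Sum>k<length s. smult (y $ k) (P (Suc k)))"
      unfolding y_def by (intro sum.cong refl) simp
    finally have "v = ZZ *\<^sub>v y" unfolding v ZZ_mult[OF y] by simp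
    then show "v \<in> col_span ZZ" unfolding col_span_def using y ZZ_carrier by auto
  qed
qed

lemma span_VV: "col_span VV = aug_rat_krylov M b s (length s)"
proof
  show "col_span VV \<subseteq> aug_rat_krylov M b s (length s)"
  proof
    fix v assume "v \<in> col_span VV"
    then obtain x where x: "x \<in> carrier_vec (Suc (length s))" and v: "v = VV *\<^sub>v x"
      unfolding col_span_def using VV_carrier by auto
    have "degree (\<Sum>k<Suc (length s). smult (x$k) (P k)) \<le> length s" by (rule sumP_deg) auto
    then show "v \<in> aug_rat_krylov M b s (length s)"
      unfolding v VV_mult[OF x] aug_rat_krylov_def rk_eq polys_upto_def by auto
  qed
next
  show "aug_rat_krylov M b s (length s) \<subseteq> col_span VV"
  proof
    fix v assume "v \<in> aug_rat_krylov M b s (length s)"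
    then obtain p where v: "v = w p" and p: "p \<in> polys_upto (Suc (length s))"
      unfolding aug_rat_krylov_def rk_eq by auto
    have "degree p \<le> length s" using p unfolding polys_upto_def by auto
    then obtain c where c: "p = (\<Sum>k\<in>{length s - length s..length s}. smult (c k) (P k))"
      using SP[of "length s" p] by auto
    have "p = (\<Sum>k<Suc (length s). smult (vec (Suc (length s)) c $ k) (P k))"
      unfolding c by (simp add: atLeast0AtMost lessThan_Suc_atMost)
    then have "v = VV *\<^sub>v vec (Suc (length s)) c" unfolding v by (subst VV_mult) auto
    then show "v \<in> col_span VV" unfolding col_span_def using VV_carrier by auto
  qed
qed

lemma KK_carrier: "KK \<in> carrier_mat (Suc (length s)) (length s)" unfolding KK_def by simp
lemma HH_carrier: "HH \<in> carrier_mat (Suc (length s)) (length s)" unfolding HH_def by simp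

lemma colZZ: "k < length s \<Longrightarrow> col ZZ k = w (P (Suc k))"
  by (rule eq_vecI) (auto simp: ZZ_def zz_def)

lemma colK_sum: assumes k: "k < length s"
  shows "(\<Sum>i<Suc (length s). smult (col KK k $ i) (P i)) = P (Suc k)"
proof -
  have "(\<Sum>i<Suc (length s). smult (col KK k $ i) (P i)) = (\<Sum>i<Suc (length s). if i = Suc k then P i else 0)"
    using k by (intro sum.cong refl) (auto simp: KK_def)
  also have "\<dots> = P (Suc k)" using k by simp
  finally show ?thesis .
qed

lemma colH_sum: assumes k: "k < length s"
  shows "(\<Sum>i<Suc (length s). smult (col HH k $ i) (P i)) = P k + smult (s!k) (P (Suc k))"
proof -
  have "(\<Sum>i<Suc (length s). smult (col HH k $ i) (P i)) =
     (\<Sum>i<Suc (length s). (if i = k then P i else 0) + (if i = Suc k then smult (s!k) (P i) else 0))"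
    using k by (intro sum.cong refl) (auto simp: HH_def)
  also have "\<dots> = P k + smult (s!k) (P (Suc k))" using k by (simp add: sum.distrib)
  finally show ?thesis .
qed

lemma VK: "VV * KK = ZZ"
proof (rule mat_col_eqI)
  fix k assume "k < dim_col ZZ"
  then have k: "k < length s" using ZZ_carrier by auto
  have ck: "col KK k \<in> carrier_vec (Suc (length s))" using KK_carrier k by auto
  have "col (VV * KK) k = VV *\<^sub>v col KK k" using col_mult2[OF VV_carrier KK_carrier k] .
  also have "\<dots> = w (P (Suc k))" unfolding VV_mult[OF ck] colK_sum[OF k] ..
  finally show "col (VV * KK) k = col ZZ k" using colZZ[OF k] by simp
qed (use VV_carrier KK_carrier ZZ_carrier in auto)

lemma MVK: "M * VV * KK = VV * HH"
proof (rule mat_col_eqI)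
  fix k assume "k < dim_col (VV * HH)"
  then have k: "k < length s" using HH_carrier by auto
  have ck: "col KK k \<in> carrier_vec (Suc (length s))" using KK_carrier k by auto
  have ch: "col HH k \<in> carrier_vec (Suc (length s))" using HH_carrier k by auto
  have MV: "M * VV \<in> carrier_mat n (Suc (length s))" using M VV_carrier by auto
  have "col (M * VV * KK) k = (M * VV) *\<^sub>v col KK k" using col_mult2[OF MV KK_carrier k] .
  also have "\<dots> = M *\<^sub>v (VV *\<^sub>v col KK k)" using assoc_mult_mat_vec[OF M VV_carrier ck] .
  also have "\<dots> = w ([:0,1:] * P (Suc k))" unfolding VV_mult[OF ck] colK_sum[OF k] w_X ..
  also have "[:0,1:] * P (Suc k) = P k + smult (s!k) (P (Suc k))" unfolding P_step[OF k] by simp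
  also have "w \<dots> = VV *\<^sub>v col HH k" unfolding VV_mult[OF ch] colH_sum[OF k] ..
  also have "\<dots> = col (VV * HH) k" using col_mult2[OF VV_carrier HH_carrier k] by simp
  finally show "col (M * VV * KK) k = col (VV * HH) k" .
qed (use M VV_carrier KK_carrier HH_carrier in auto)

lemma lowerD_ut: "upper_triangular (lower_part HH - z \<cdot>\<^sub>m lower_part KK)"
  unfolding upper_triangular_def lower_part_def using HH_carrier KK_carrier by (auto simp: HH_def KK_def)

lemma lowerH_ut: "upper_triangular (lower_part HH)"
  unfolding upper_triangular_def lower_part_def using HH_carrier by (auto simp: HH_def)

lemma detD: "det (lower_part HH - z \<cdot>\<^sub>m lower_part KK) = (\<Prod>x\<leftarrow>s. (x - z))"
proof -
  have c: "lower_part HH - z \<cdot>\<^sub>m lower_part KK \<in> carrier_mat (length s) (length s)"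
    unfolding lower_part_def using HH_carrier KK_carrier by auto
  have "det (lower_part HH - z \<cdot>\<^sub>m lower_part KK) = prod_list (diag_mat (lower_part HH - z \<cdot>\<^sub>m lower_part KK))"
    by (rule det_upper_triangular[OF lowerD_ut c])
  also have "diag_mat (lower_part HH - z \<cdot>\<^sub>m lower_part KK) = map (\<lambda>x. x - z) s"
  proof (rule nth_equalityI)
    show "length (diag_mat (lower_part HH - z \<cdot>\<^sub>m lower_part KK)) = length (map (\<lambda>x. x - z) s)"
      using c KK_carrier HH_carrier unfolding diag_mat_def lower_part_def by simp
    fix i assume "i < length (diag_mat (lower_part HH - z \<cdot>\<^sub>m lower_part KK))"
    then have i: "i < length s" using c KK_carrier HH_carrier unfolding diag_mat_def lower_part_def by simp
    show "diag_mat (lower_part HH - z \<cdot>\<^sub>m lower_part KK) ! i = map (\<lambda>x. x - z) s ! i"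
      using i c HH_carrier KK_carrier unfolding diag_mat_def lower_part_def by (simp add: HH_def KK_def)
  qed
  finally show ?thesis .
qed

lemma main_rk: assumes var: "mat_variant M (rat_krylov M b s (length s))"
  shows "\<exists>V K H Z.
           RAD_associated M b s (length s) V K H \<and>
           K = mat (Suc (length s)) (length s) (\<lambda>(i, k). if i = Suc k then 1 else 0) \<and>
           H \<in> carrier_mat (Suc (length s)) (length s) \<and> upper_triangular (lower_part H) \<and>
           Z \<in> carrier_mat n (length s) \<and>
           is_basis_mat Z (rat_krylov M b s (length s)) \<and>
           V = mat_of_cols n (b # cols Z)"
proof (intro exI conjI)
  show "KK = mat (Suc (length s)) (length s) (\<lambda>(i, k). if i = Suc k then 1 else 0)" unfolding KK_def ..
  show "HH \<in> carrier_mat (Suc (length s)) (length s)" by (rule HH_carrier)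
  show "upper_triangular (lower_part HH)" by (rule lowerH_ut)
  show "ZZ \<in> carrier_mat n (length s)" by (rule ZZ_carrier)
  show "is_basis_mat ZZ (rat_krylov M b s (length s))"
    unfolding is_basis_mat_def using fcr_ZZ[OF var] span_ZZ[OF var] by simp
  show "VV = mat_of_cols n (b # cols ZZ)" unfolding VV_def ..
  have dM: "dim_row M = n" using M by auto
  obtain z0 where z0: "z0 \<notin> set s" using ex_new_if_finite[OF infinite_UNIV_char_0, of "set s"] by auto
  have reg: "\<exists>z. det (lower_part HH - z \<cdot>\<^sub>m lower_part KK) \<noteq> 0"
    by (rule exI[of _ z0]) (use z0 in \<open>auto simp: detD prod_list_zero_iff\<close>)
  have poles: "\<forall>z. det (lower_part HH - z \<cdot>\<^sub>m lower_part KK) = 0 \<longrightarrow> \<not> eigenvalue M z"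
    using ne by (auto simp: detD prod_list_zero_iff)
  have rad: "is_RAD M (length s) VV KK HH"
    unfolding is_RAD_def Let_def dM
    using M VV_carrier KK_carrier HH_carrier fcr_VV[OF var] MVK reg poles
    by (auto simp: upper_hessenberg_def KK_def HH_def)
  have pa: "RAD_poles_are KK HH s"
    unfolding RAD_poles_are_def using KK_carrier by (auto simp: detD intro: exI[of _ 1])
  have c0: "col VV 0 = 1 \<cdot>\<^sub>v b" unfolding VV_def using b by simp
  have c0': "\<exists>\<alpha>. \<alpha> \<noteq> 0 \<and> col VV 0 = \<alpha> \<cdot>\<^sub>v b" by (rule exI[of _ 1]) (simp only: c0, simp)
  show "RAD_associated M b s (length s) VV KK HH"
    unfolding RAD_associated_def using rad pa c0' span_VV VK span_ZZ[OF var]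
    by simp
qed

end

theorem lemma3p1:
  fixes A C :: "complex mat" and s :: "complex list" and n j :: nat
  assumes "A \<in> carrier_mat n n"
    and "C \<in> carrier_mat 1 n"
    and "length s = j"
    and "\<forall>x\<in>set s. \<not> eigenvalue (mat_adjoint A) x"
    and "mat_variant (mat_adjoint A) (rat_krylov (mat_adjoint A) (col (mat_adjoint C) 0) s j)"
  shows "\<exists>V K H Z.
           RAD_associated (mat_adjoint A) (col (mat_adjoint C) 0) s j V K H \<and>
           K = mat (Suc j) j (\<lambda>(i, k). if i = Suc k then 1 else 0) \<and>
           H \<in> carrier_mat (Suc j) j \<and> upper_triangular (lower_part H) \<and>
           Z \<in> carrier_mat n j \<and>
           is_basis_mat Z (rat_krylov (mat_adjoint A) (col (mat_adjoint C) 0) s j) \<and>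
           V = mat_of_cols n (col (mat_adjoint C) 0 # cols Z)"
proof -
  have MA: "mat_adjoint A \<in> carrier_mat n n"
    using assms(1) unfolding mat_adjoint_def by auto
  have CA: "mat_adjoint C \<in> carrier_mat n 1"
    using assms(2) unfolding mat_adjoint_def by auto
  have bC: "col (mat_adjoint C) 0 \<in> carrier_vec n" using CA by auto
  interpret rk "mat_adjoint A" "col (mat_adjoint C) 0" s n
    using MA bC assms(4) by unfold_locales auto
  show ?thesis unfolding assms(3)[symmetric] by (rule main_rk) (use assms(5,3) in simp)
qed

end
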